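(* Let $\mathbb F\subseteq\mathbb D$ be finite and $n:=\mathrm{lh}(\mathbb F)$. Then there exist $m\in\mathbb N$ and a finite sequence $\mathbb F=:\mathbb F_0,\mathbb F_1,\dots,\mathbb F_N$ with $\mathbb F_l=\Phi_{h_l}^{(i_l)}(\mathbb F_{l-1})$ for some $\mathbb F_{l-1}$-admissible index $(h_l,i_l)\in\mathbb F_{l-1}$ ($l=1,\dots,N$), such that $\mathbb F_N\subseteq\mathbb D_{m+1}^{m+n}$.
   Context: Dyadic intervals: $\Delta_k^{(j)}:=[\frac{j-1}{2^k},\frac{j}{2^k})$ for $k\ge0$. Dyadic tree $\mathbb D:=\{(k,j):k\ge1;\ j=1,\dots,2^{k-1}\}$; $\mathbb D_m^n:=\{(k,j):k=m,\dots,n;\ j=1,\dots,2^{k-1}\}$. Branches: $\mathbb B(t):=\{(k,j)\in\mathbb D:t\in\Delta_{k-1}^{(j)}\}$; local height $\mathrm{lh}(\mathbb F):=\max_{t\in[0,1)}|\mathbb F\cap\mathbb B(t)|$. An index $(h,i)\in\mathbb F$ is $\mathbb F$-admissible if neither $(h+1,2i-1)$ nor $(h+1,2i)$ belongs to $\mathbb F$. Fork: $\mathbb F_h^{(i)}:=\{(h,i),(h+1,2i-1),(h+1,2i)\}$. For $(k,j)\in\mathbb D$ define $j^\ast$: $j^\ast=j+2^{k-h-2}$ if $\Delta_{k-1}^{(j)}\subseteq\Delta_{h+1}^{(4i-2)}$; $j^\ast=j-2^{k-h-2}$ if $\Delta_{k-1}^{(j)}\subseteq\Delta_{h+1}^{(4i-1)}$;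 $j^\ast=j$ otherwise. Then $\Phi_h^{(i)}(\mathbb F):=\{(h+1,2i-1),(h+1,2i)\}\cup\{(k,j^\ast):(k,j)\in\mathbb F\setminus\mathbb F_h^{(i)}\}$. *)

theory Defs
  imports Complex_Main
begin

definition dyad :: "nat \<Rightarrow> nat \<Rightarrow> real set" where
  "dyad k j = {x. (real j - 1) / 2 ^ k \<le> x \<and> x < real j / 2 ^ k}"

definition dtree :: "(nat \<times> nat) set" where
  "dtree = {(k, j). 1 \<le> k \<and> 1 \<le> j \<and> j \<le> 2 ^ (k - 1)}"

definition dtree_lv :: "nat \<Rightarrow> nat \<Rightarrow> (nat \<times> nat) set" where
  "dtree_lv m n = {(k, j). m \<le> k \<and> k \<le> n \<and> 1 \<le> k \<and> 1 \<le> j \<and> j \<le> 2 ^ (k - 1)}"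

definition branch :: "real \<Rightarrow> (nat \<times> nat) set" where
  "branch t = {(k, j) \<in> dtree. t \<in> dyad (k - 1) j}"

definition lh :: "(nat \<times> nat) set \<Rightarrow> nat" where
  "lh F = Max {card (F \<inter> branch t) | t. 0 \<le> t \<and> t < 1}"

definition admissible :: "(nat \<times> nat) set \<Rightarrow> nat \<Rightarrow> nat \<Rightarrow> bool" where
  "admissible F h i \<longleftrightarrow> (h, i) \<in> F \<and> (h + 1, 2 * i - 1) \<notin> F \<and> (h + 1, 2 * i) \<notin> F"

definition fork :: "nat \<Rightarrow> nat \<Rightarrow> (nat \<times> nat) set" where
  "fork h i = {(h, i), (h + 1, 2 * i - 1), (h + 1, 2 * i)}"

definition jstar :: "nat \<Rightarrow> nat \<Rightarrow> nat \<Rightarrow> nat \<Rightarrow> nat" where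
  "jstar h i k j =
    (if dyad (k - 1) j \<subseteq> dyad (h + 1) (4 * i - 2) then j + 2 ^ (k - h - 2)
     else if dyad (k - 1) j \<subseteq> dyad (h + 1) (4 * i - 1) then j - 2 ^ (k - h - 2)
     else j)"

definition Phi :: "nat \<Rightarrow> nat \<Rightarrow> (nat \<times> nat) set \<Rightarrow> (nat \<times> nat) set" where
  "Phi h i F = {(h + 1, 2 * i - 1), (h + 1, 2 * i)}
      \<union> {(k, jstar h i k j) | k j. (k, j) \<in> F - fork h i}"

end

theory Submission imports Defs begin

lemma ivl_sub:
  fixes x y a b :: real
  assumes "x < y"
  shows "({t. x \<le> t \<and> t < y} \<subseteq> {t. a \<le> t \<and> t < b}) \<longleftrightarrow> (a \<le> x \<and> y \<le> b)"
proof
  assume S: "{t. x \<le> t \<and> t < y} \<subseteq> {t. a \<le> t \<and> t < b}"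
  have "x \<in> {t. x \<le> t \<and> t < y}" using assms by simp
  hence ax: "a \<le> x" using S by auto
  have "y \<le> b"
  proof (rule ccontr)
    assume "\<not> y \<le> b"
    hence "max x b \<in> {t. x \<le> t \<and> t < y}" using assms by auto
    hence "max x b \<in> {t. a \<le> t \<and> t < b}" using S by blast
    thus False by simp
  qed
  thus "a \<le> x \<and> y \<le> b" using ax by simp
next
  assume h: "a \<le> x \<and> y \<le> b"
  show "{t. x \<le> t \<and> t < y} \<subseteq> {t. a \<le> t \<and> t < b}"
  proof (rule subsetI)
    fix t assume "t \<in> {t. x \<le> t \<and> t < y}"
    thus "t \<in> {t. a \<le> t \<and> t < b}" using h by simp
  qed
qed

lemma natpart:
  fixes u v a b :: nat
  shows "(v * 2^a \<le> u * 2^b \<and> (u+1) * 2^b \<le> (v+1) * 2^a) \<longleftrightarrow> (b \<le> a \<and> u div 2^(a-b) = v)"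
proof (cases "b \<le> a")
  case True
  define p :: nat where "p = 2^(a-b)"
  have pp: "p > 0" unfolding p_def by simp
  have pa: "(2::nat)^a = 2^b * p" unfolding p_def using True by (simp add: power_add[symmetric])
  have e1: "v * 2^a = (v*p) * 2^b" unfolding pa by (simp only: mult_ac)
  have e2: "(v+1) * 2^a = ((v+1)*p) * 2^b" unfolding pa by (simp only: mult_ac)
  have "(v * 2^a \<le> u * 2^b \<and> (u+1) * 2^b \<le> (v+1) * 2^a) \<longleftrightarrow> (v * p \<le> u \<and> u + 1 \<le> (v+1) * p)"
    unfolding e1 e2 by (simp only: mult_le_cancel2) simp
  also have "\<dots> \<longleftrightarrow> u div p = v"
  proof
    assume "v * p \<le> u \<and> u + 1 \<le> (v+1) * p"
    thus "u div p = v" by (intro div_nat_eqI) (auto simp: mult.commute)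
  next
    assume h: "u div p = v"
    have "v * p \<le> u" using h by (metis div_times_less_eq_dividend)
    moreover have "u < (v+1) * p"
    proof -
      have m: "u mod p < p" using pp by simp
      have "u = v * p + u mod p" using h div_mult_mod_eq[of u p] by simp
      moreover have "(v+1) * p = v * p + p" by simp
      ultimately show ?thesis using m by linarith
    qed
    ultimately show "v * p \<le> u \<and> u + 1 \<le> (v+1) * p" by simp
  qed
  finally show ?thesis using True p_def by simp
next
  case False
  define p :: nat where "p = 2^(b-a)"
  have p2: "p \<ge> 2"
  proof -
    have "(2::nat)^1 \<le> 2^(b-a)" using False by (intro power_increasing) auto
    thus ?thesis unfolding p_def by simp
  qed
  have pb: "(2::nat)^b = 2^a * p" unfolding p_def using False by (simp add: power_add[symmetric])
  have e1: "u * 2^b = (u*p) * 2^a" unfolding pb by (simp only: mult_ac)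
  have e2: "(u+1) * 2^b = ((u+1)*p) * 2^a" unfolding pb by (simp only: mult_ac)
  have "\<not> (v * 2^a \<le> u * 2^b \<and> (u+1) * 2^b \<le> (v+1) * 2^a)"
  proof
    assume "v * 2^a \<le> u * 2^b \<and> (u+1) * 2^b \<le> (v+1) * 2^a"
    hence h0: "v * 2^a \<le> (u*p) * 2^a" "((u+1)*p) * 2^a \<le> (v+1) * 2^a" unfolding e1 e2 by blast+
    have h: "v \<le> u * p" "(u+1) * p \<le> v+1"
      using h0(1) mult_le_cancel2[of v "2^a" "u*p"] h0(2) mult_le_cancel2[of "(u+1)*p" "2^a" "v+1"]
      by simp_all
    have "(u+1) * p = u * p + p" by simp
    thus False using h p2 by linarith
  qed
  thus ?thesis using False by simp
qed

lemma dyad_sub: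
  assumes "j \<ge> 1" "j' \<ge> 1"
  shows "dyad a j \<subseteq> dyad b j' \<longleftrightarrow> b \<le> a \<and> (j - 1) div 2^(a-b) = j' - 1"
proof -
  obtain u v where u: "j = u + 1" and v: "j' = v + 1" using assms by (metis add.commute le_Suc_ex)
  have lt: "real u / 2^a < real (u+1) / 2^a" by (simp add: divide_strict_right_mono)
  have "dyad a j \<subseteq> dyad b j' \<longleftrightarrow> (real v / 2^b \<le> real u / 2^a \<and> real (u+1) / 2^a \<le> real (v+1) / 2^b)"
    unfolding dyad_def u v using ivl_sub[OF lt] by simp
  also have "\<dots> \<longleftrightarrow> (real (v * 2^a) \<le> real (u * 2^b) \<and> real ((u+1) * 2^b) \<le> real ((v+1) * 2^a))"
    by (simp add: field_simps)
  also have "\<dots> \<longleftrightarrow> (v * 2^a \<le> u * 2^b \<and> (u+1) * 2^b \<le> (v+1) * 2^a)"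
    by (simp only: of_nat_le_iff)
  also have "\<dots> \<longleftrightarrow> b \<le> a \<and> (j - 1) div 2^(a-b) = j' - 1" using natpart u v by simp
  finally show ?thesis .
qed


definition anc :: "nat \<times> nat \<Rightarrow> nat \<times> nat \<Rightarrow> bool" where
  "anc z w \<longleftrightarrow> fst z \<le> fst w \<and> (snd w - 1) div 2^(fst w - fst z) = snd z - 1"

definition js :: "nat \<Rightarrow> nat \<Rightarrow> nat \<Rightarrow> nat \<Rightarrow> nat" where
  "js h i k j = (if h+2 \<le> k \<and> (j-1) div 2^(k-h-2) = 4*i-3 then j + 2^(k-h-2)
     else if h+2 \<le> k \<and> (j-1) div 2^(k-h-2) = 4*i-2 then j - 2^(k-h-2) else j)"

lemma jstar_js:
  assumes "i \<ge> 1" "k \<ge> 1" "j \<ge> 1"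
  shows "jstar h i k j = js h i k j"
proof -
  have l: "h+1 \<le> k-1 \<longleftrightarrow> h+2 \<le> k" "k - 1 - (h+1) = k-h-2" using assms by arith+
  have a: "dyad (k - 1) j \<subseteq> dyad (h + 1) (4 * i - 2) \<longleftrightarrow> h+2 \<le> k \<and> (j-1) div 2^(k-h-2) = 4*i-3"
    using dyad_sub[of j "4*i-2" "k-1" "h+1"] assms l by simp
  have b: "dyad (k - 1) j \<subseteq> dyad (h + 1) (4 * i - 1) \<longleftrightarrow> h+2 \<le> k \<and> (j-1) div 2^(k-h-2) = 4*i-2"
    using dyad_sub[of j "4*i-1" "k-1" "h+1"] assms l by (simp add: numeral_2_eq_2)
  show ?thesis unfolding jstar_def js_def a b by simp
qed

lemma anc_refl: "anc z z" unfolding anc_def by simp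

lemma anc_trans:
  assumes "anc x y" "anc y z" shows "anc x z"
proof -
  have p: "(2::nat)^(fst z - fst x) = 2^(fst z - fst y) * 2^(fst y - fst x)"
    using assms unfolding anc_def by (simp add: power_add[symmetric])
  have "(snd z - 1) div 2^(fst z - fst x) = ((snd z - 1) div 2^(fst z - fst y)) div 2^(fst y - fst x)"
    unfolding p by (simp add: div_mult2_eq)
  thus ?thesis using assms unfolding anc_def by simp
qed

lemma anc_child1: "i \<ge> 1 \<Longrightarrow> anc (h, i) (h+1, 2*i-1)"
  unfolding anc_def by simp

lemma anc_child2: "i \<ge> 1 \<Longrightarrow> anc (h, i) (h+1, 2*i)"
  unfolding anc_def by simp

lemma anc_fst: "anc z w \<Longrightarrow> fst z \<le> fst w" unfolding anc_def by simp

lemma anc_same_level: "anc (k, j1) w \<Longrightarrow> anc (k, j2) w \<Longrightarrow> j1 \<ge> 1 \<Longrightarrow> j2 \<ge> 1 \<Longrightarrow> j1 = j2"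
  unfolding anc_def by simp

lemma divp_eq: "(r::nat) < p \<Longrightarrow> (a * p + r) div p = a"
  by (intro div_nat_eqI) (auto simp: algebra_simps)

lemma qdiv: "(s::nat) \<ge> 2 \<Longrightarrow> (x::nat) div 4 = y div 4 \<Longrightarrow> x div 2^s = y div 2^s"
proof -
  assume s: "s \<ge> 2" and e: "x div 4 = y div 4"
  have "(2::nat)^s = 4 * 2^(s-2)" using s by (metis le_add_diff_inverse power_add power2_eq_square numeral_Bit0 mult_2 numeral_One one_add_one)
  thus ?thesis using e by (simp add: div_mult2_eq)
qed


lemma anc_sw:
  assumes i: "i \<ge> 1" and j: "j \<ge> 1" and J: "J \<ge> 1"
    and nf: "\<not> (k = h+1 \<and> (j = 2*i-1 \<or> j = 2*i))"
    and a: "anc (k, js h i k j) (K, J)"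
  shows "anc (k, j) (K, js h i K J)"
proof -
  have kK: "k \<le> K" using a unfolding anc_def by simp
  define d where "d = K - k"
  define u where "u = j - 1"
  define U where "U = J - 1"
  have jU: "J = U + 1" "j = u + 1" using j J unfolding u_def U_def by simp_all
  have D: "U div 2^d = js h i k j - 1" using a unfolding anc_def d_def U_def by simp
  show ?thesis
  proof (cases "h + 2 \<le> k")
    case True
    define e where "e = k - h - 2"
    have E: "K - h - 2 = d + e" unfolding d_def e_def using True kK by simp
    define q where "q = u div 2^e"
    have Q: "U div 2^(K-h-2) = (U div 2^d) div 2^e" unfolding E by (simp add: power_add div_mult2_eq)
    have hK: "h + 2 \<le> K" using True kK by simp
    have Ud: "U = (U div 2^d) * 2^d + U mod 2^d" by (metis div_mult_mod_eq)
    have r: "U mod 2^d < 2^d" by simp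
    show ?thesis
    proof (cases "q = 4*i-3")
      case q1: True
      have jsk: "js h i k j = j + 2^e" unfolding js_def using True q1 unfolding q_def u_def e_def by simp
      have Dv: "U div 2^d = u + 2^e" using D jsk jU by simp
      have "U div 2^(K-h-2) = q + 1" unfolding Q Dv q_def
        using div_mult_self2[of "2^e" u 1] by simp
      hence QQ: "U div 2^(K-h-2) = 4*i-2" using q1 i by simp
      have jsK: "js h i K J = J - 2^(K-h-2)" unfolding js_def using hK QQ i unfolding U_def by simp
      have "J - 2^(K-h-2) - 1 = u * 2^d + U mod 2^d"
        using Ud unfolding Dv E jU by (simp add: power_add algebra_simps)
      hence "(js h i K J - 1) div 2^d = u" unfolding jsK using divp_eq[OF r] by simp
      thus ?thesis unfolding anc_def using kK d_def u_def by simp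
    next
      case q1: False
      show ?thesis
      proof (cases "q = 4*i-2")
        case q2: True
        have jsk: "js h i k j = j - 2^e" unfolding js_def using True q1 q2 unfolding q_def u_def e_def by simp
        have ug: "u \<ge> 2 * 2^e"
        proof -
          have "q * 2^e \<le> u" unfolding q_def by (simp add: div_times_less_eq_dividend)
          moreover have "q \<ge> 2" using q2 i by simp
          ultimately show ?thesis by (meson le_trans mult_le_cancel2)
        qed
        have Dv: "U div 2^d = u - 2^e" using D jsk jU ug by simp
        have "(u - 2^e) div 2^e + 1 = u div 2^e"
          using div_mult_self2[of "2^e" "u - 2^e" 1] ug by simp
        hence "U div 2^(K-h-2) = q - 1" unfolding Q Dv q_def by simp
        hence QQ: "U div 2^(K-h-2) = 4*i-3" using q2 i by simp
        have jsK: "js h i K J = J + 2^(K-h-2)" unfolding js_def using hK QQ i unfolding U_def by simp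
        have U2: "U = (u - 2^e) * 2^d + U mod 2^d" using Ud Dv by simp
        have ue: "u - 2^e + 2^e = u" using ug by simp
        have dd: "(u - 2^e + 2^e) * 2^d = (u-2^e)*2^d + 2^e*2^d" by (rule add_mult_distrib)
        have "U + 2^(K-h-2) = (u - 2^e + 2^e) * 2^d + U mod 2^d" unfolding E power_add dd
          using U2 by (simp add: mult.commute)
        hence "J + 2^(K-h-2) - 1 = u * 2^d + U mod 2^d" using jU ue by simp
        hence "(js h i K J - 1) div 2^d = u" unfolding jsK using divp_eq[OF r] by simp
        thus ?thesis unfolding anc_def using kK d_def u_def by simp
      next
        case q2: False
        have jsk: "js h i k j = j" unfolding js_def using q1 q2 unfolding q_def u_def e_def by simp
        have Dv: "U div 2^d = u" using D jsk jU by simp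
        have "U div 2^(K-h-2) = q" unfolding Q Dv q_def ..
        hence jsK: "js h i K J = J" unfolding js_def using q1 q2 unfolding U_def by simp
        show ?thesis unfolding anc_def using kK d_def u_def Dv jsK U_def by simp
      qed
    qed
  next
    case False
    have jsk: "js h i k j = j" unfolding js_def using False by simp
    have Dv: "U div 2^d = u" using D jsk jU by simp
    show ?thesis
    proof (cases "h + 2 \<le> K")
      case False2: False
      have "js h i K J = J" unfolding js_def using False2 by simp
      thus ?thesis unfolding anc_def using kK d_def u_def Dv U_def by simp
    next
      case hK: True
      define E where "E = K - h - 2"
      define s where "s = h + 2 - k"
      have ds: "d = E + s" unfolding d_def E_def s_def using hK False by simp
      have s1: "s \<ge> 1" unfolding s_def using False by simp
      define Q where "Q = U div 2^E"
      have UE: "U = Q * 2^E + U mod 2^E" unfolding Q_def by (metis div_mult_mod_eq)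
      have rE: "U mod 2^E < 2^E" by simp
      have DQ: "U div 2^d = Q div 2^s" unfolding ds Q_def by (simp add: power_add div_mult2_eq)
      show ?thesis
      proof (cases "Q = 4*i-3")
        case Q1: True
        have jsK: "js h i K J = J + 2^E" unfolding js_def E_def using hK Q1 unfolding Q_def U_def E_def by simp
        have "U + 2^E = (Q+1) * 2^E + U mod 2^E" using UE by (simp add: algebra_simps)
        hence "(U + 2^E) div 2^E = Q + 1" using divp_eq[OF rE] by metis
        hence X: "(js h i K J - 1) div 2^d = (Q+1) div 2^s" unfolding jsK ds
          using jU by (simp add: power_add div_mult2_eq)
        have "(Q+1) div 2^s = Q div 2^s"
        proof (cases "s = 1")
          case True
          hence "u = 2*i - 2" using Dv DQ Q1 i by simp
          hence "j = 2*i-1" "k = h+1" using jU i True s_def False by simp_all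
          thus ?thesis using nf by simp
        next
          case False
          hence "s \<ge> 2" using s1 by simp
          moreover have "(Q+1) div 4 = Q div 4" using Q1 i by simp presburger
          ultimately show ?thesis using qdiv by blast
        qed
        thus ?thesis unfolding anc_def using kK d_def u_def Dv DQ X by simp
      next
        case Q1: False
        show ?thesis
        proof (cases "Q = 4*i-2")
          case Q2: True
          have jsK: "js h i K J = J - 2^E" unfolding js_def E_def using hK Q1 Q2 unfolding Q_def U_def E_def by simp
          have Qg: "Q \<ge> 1" using Q2 i by simp
          have qq: "Q * 2^E = (Q-1)*2^E + 2^E"
          proof -
            have "(Q - 1 + 1) * 2^E = (Q-1)*2^E + 2^E" by (simp only: add_mult_distrib mult_1)
            thus ?thesis using Qg by simp
          qed
          have "U - 2^E = (Q-1) * 2^E + U mod 2^E" using UE qq by linarith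
          hence "(U - 2^E) div 2^E = Q - 1" using divp_eq[OF rE] by metis
          hence X: "(js h i K J - 1) div 2^d = (Q-1) div 2^s" unfolding jsK ds
            using jU by (simp add: power_add div_mult2_eq)
          have "(Q-1) div 2^s = Q div 2^s"
          proof (cases "s = 1")
            case True
            hence "u = 2*i - 1" using Dv DQ Q2 i by simp
            hence "j = 2*i" "k = h+1" using jU i True s_def False by simp_all
            thus ?thesis using nf by simp
          next
            case False
            hence "s \<ge> 2" using s1 by simp
            moreover have "(Q-1) div 4 = Q div 4" using Q2 i by simp presburger
            ultimately show ?thesis using qdiv by blast
          qed
          thus ?thesis unfolding anc_def using kK d_def u_def Dv DQ X by simp
        next
          case Q2: False
          have "js h i K J = J" unfolding js_def using Q1 Q2 unfolding Q_def U_def E_def by simp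
          thus ?thesis unfolding anc_def using kK d_def u_def Dv U_def by simp
        qed
      qed
    qed
  qed
qed


definition sw :: "nat \<Rightarrow> nat \<Rightarrow> nat \<times> nat \<Rightarrow> nat \<times> nat" where
  "sw h i z = (fst z, jstar h i (fst z) (snd z))"

lemma Phi_eq: "Phi h i G = {(h + 1, 2 * i - 1), (h + 1, 2 * i)} \<union> sw h i ` (G - fork h i)"
  unfolding Phi_def sw_def by force

lemma dtreeD: "(k, j) \<in> dtree \<Longrightarrow> k \<ge> 1 \<and> j \<ge> 1 \<and> j \<le> 2^(k-1)"
  unfolding dtree_def by simp

lemma js_dtree:
  assumes hi: "(h, i) \<in> dtree" and kj: "(k, j) \<in> dtree"
  shows "(k, js h i k j) \<in> dtree"
proof -
  have h: "h \<ge> 1" "i \<ge> 1" "i \<le> 2^(h-1)" using dtreeD[OF hi] by auto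
  have k: "k \<ge> 1" "j \<ge> 1" "j \<le> 2^(k-1)" using dtreeD[OF kj] by auto
  define e where "e = k - h - 2"
  define q where "q = (j - 1) div 2^e"
  have qle: "q * 2^e \<le> j - 1" unfolding q_def by (simp add: div_times_less_eq_dividend)
  have qlt: "j - 1 < (q + 1) * 2^e"
  proof -
    have m: "(j - 1) mod 2^e < 2^e" by simp
    have "j - 1 = q * 2^e + (j - 1) mod 2^e" unfolding q_def using div_mult_mod_eq[of "j-1" "2^e"] by simp
    moreover have "(q+1) * 2^e = q * 2^e + 2^e" by simp
    ultimately show ?thesis using m by linarith
  qed
  show ?thesis
  proof (cases "h + 2 \<le> k \<and> q = 4*i-3")
    case True
    have js: "js h i k j = j + 2^e" unfolding js_def using True unfolding q_def e_def by simp
    have "q + 1 = 4*i - 2" using True h by simp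
    hence "j - 1 < (4*i - 2) * 2^e" using qlt by simp
    hence "j + 2^e \<le> (4*i - 2) * 2^e + 2^e" using k by linarith
    also have "\<dots> = (4 * i - 1) * 2^e" using h by (simp add: algebra_simps)
    also have "\<dots> \<le> (4 * 2^(h-1)) * 2^e" using h by simp
    also have "\<dots> = 2^(k-1)"
    proof -
      have "(2::nat)^(h+1) = 2^2 * 2^(h-1)" unfolding power_add[symmetric] using h by simp
      hence A1: "(4::nat) * 2^(h-1) = 2^(h+1)" by simp
      have A2: "h + 1 + e = k - 1" unfolding e_def using True by linarith
      have "(4 * 2^(h-1)) * 2^e = (2::nat)^(h+1) * 2^e" by (simp only: A1)
      also have "\<dots> = 2^(h+1+e)" by (simp only: power_add)
      also have "\<dots> = 2^(k-1)" by (simp only: A2)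
      finally show ?thesis .
    qed
    finally show ?thesis unfolding js dtree_def using k by simp
  next
    case F1: False
    show ?thesis
    proof (cases "h + 2 \<le> k \<and> q = 4*i-2")
      case True
      have js: "js h i k j = j - 2^e" unfolding js_def using True F1 unfolding q_def e_def by simp
      have "2 * 2^e \<le> q * 2^e" using True h by simp
      hence "2 * 2^e \<le> j - 1" using qle by linarith
      hence "j - 2^e \<ge> 1" using k by linarith
      thus ?thesis unfolding js dtree_def using k by simp
    next
      case False
      have js: "js h i k j = j" unfolding js_def using False F1 unfolding q_def e_def by auto
      show ?thesis unfolding js using kj .
    qed
  qed
qed

lemma sw_js: assumes "(h, i) \<in> dtree" "z \<in> dtree" shows "sw h i z = (fst z, js h i (fst z) (snd z))"
proof (cases z)
  case (Pair k j)
  have "i \<ge> 1" "k \<ge> 1" "j \<ge> 1" using dtreeD assms Pair by auto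
  thus ?thesis unfolding sw_def using jstar_js Pair by simp
qed

lemma sw_dtree: "(h, i) \<in> dtree \<Longrightarrow> z \<in> dtree \<Longrightarrow> sw h i z \<in> dtree"
proof (cases z)
  case (Pair k j)
  assume "(h, i) \<in> dtree" "z \<in> dtree"
  thus ?thesis using sw_js js_dtree Pair by simp
qed


definition Inv :: "nat \<Rightarrow> nat \<Rightarrow> (nat \<times> nat) set \<Rightarrow> bool" where
  "Inv n M G \<longleftrightarrow> G \<subseteq> dtree \<and> finite G \<and> (\<forall>z\<in>G. fst z \<le> M) \<and>
     (\<forall>w\<in>dtree. card {z\<in>G. anc z w} \<le> n)"

definition pot :: "nat \<Rightarrow> (nat \<times> nat) set \<Rightarrow> nat" where
  "pot M G = (\<Sum>z\<in>G. (3::nat)^(M - fst z))"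

lemma fst_sw[simp]: "fst (sw h i z) = fst z" unfolding sw_def by simp

lemma step_inv:
  assumes I: "Inv n M G" and ad: "admissible G h i" and hM: "h < M"
  shows "Inv n M (Phi h i G) \<and> pot M (Phi h i G) < pot M G"
proof -
  have Gd: "G \<subseteq> dtree" and fG: "finite G" and lev: "\<forall>z\<in>G. fst z \<le> M"
    and cnt: "\<forall>w\<in>dtree. card {z\<in>G. anc z w} \<le> n" using I unfolding Inv_def by auto
  have hiG: "(h, i) \<in> G" and c1G: "(h+1, 2*i-1) \<notin> G" and c2G: "(h+1, 2*i) \<notin> G"
    using ad unfolding admissible_def by auto
  have hi: "(h, i) \<in> dtree" using hiG Gd by auto
  have hh: "h \<ge> 1" "i \<ge> 1" "i \<le> 2^(h-1)" using dtreeD[OF hi] by auto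
  have "(2::nat)^h = 2^1 * 2^(h-1)" unfolding power_add[symmetric] using hh by simp
  hence "2 * i \<le> 2^h" using hh by simp
  hence c1d: "(h+1, 2*i-1) \<in> dtree" and c2d: "(h+1, 2*i) \<in> dtree" using hh unfolding dtree_def
    by auto
  let ?c1 = "(h+1, 2*i-1)" and ?c2 = "(h+1, 2*i)"
  let ?P = "Phi h i G"
  have Pd: "?P \<subseteq> dtree" unfolding Phi_eq using c1d c2d sw_dtree[OF hi] Gd by auto
  have fP: "finite ?P" unfolding Phi_eq using fG by simp
  have levP: "\<forall>z\<in>?P. fst z \<le> M" unfolding Phi_eq using lev hM by auto
  have cntP: "card {z\<in>?P. anc z w} \<le> n" if w: "w \<in> dtree" for w
  proof -
    obtain K J where wKJ: "w = (K, J)" by fastforce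
    define w' where "w' = sw h i w"
    have w'd: "w' \<in> dtree" unfolding w'_def using sw_dtree[OF hi w] .
    have w'e: "w' = (K, js h i K J)" unfolding w'_def using sw_js[OF hi w] wKJ by simp
    have JJ: "J \<ge> 1" using dtreeD w wKJ by auto
    define C where "C = {c \<in> {?c1, ?c2}. anc c w}"
    define Z where "Z = {z \<in> G - fork h i. anc (sw h i z) w}"
    have sub: "{z\<in>?P. anc z w} \<subseteq> C \<union> sw h i ` Z" unfolding Phi_eq C_def Z_def by auto
    have fC: "finite C" unfolding C_def by simp
    have fZ: "finite Z" unfolding Z_def using fG by simp
    have c1: "card {z\<in>?P. anc z w} \<le> card C + card Z"
    proof -
      have "card {z\<in>?P. anc z w} \<le> card (C \<union> sw h i ` Z)"
        using sub fC fZ by (intro card_mono) auto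
      also have "\<dots> \<le> card C + card (sw h i ` Z)" by (rule card_Un_le)
      also have "\<dots> \<le> card C + card Z" using card_image_le[OF fZ] by simp
      finally show ?thesis .
    qed
    let ?A = "{z\<in>G. anc z w'}"
    have fA: "finite ?A" using fG by simp
    have ZA: "Z \<subseteq> ?A - {(h, i)}"
    proof
      fix z assume zZ: "z \<in> Z"
      obtain k j where zkj: "z = (k, j)" by fastforce
      have zG: "z \<in> G" and znf: "z \<notin> fork h i" and a: "anc (sw h i z) w" using zZ unfolding Z_def by auto
      have zd: "z \<in> dtree" using zG Gd by auto
      have jj: "j \<ge> 1" using dtreeD zd zkj by auto
      have a2: "anc (k, js h i k j) (K, J)" using a sw_js[OF hi zd] zkj wKJ by simp
      have nf: "\<not> (k = h+1 \<and> (j = 2*i-1 \<or> j = 2*i))" using znf zkj unfolding fork_def by auto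
      have "anc (k, j) (K, js h i K J)" using anc_sw[OF hh(2) jj JJ nf a2] .
      thus "z \<in> ?A - {(h, i)}" using zG znf zkj w'e unfolding fork_def by auto
    qed
    show ?thesis
    proof (cases "C = {}")
      case True
      have "card Z \<le> card ?A" using ZA fA by (meson Diff_subset card_mono subset_trans)
      moreover have "card ?A \<le> n" using cnt w'd by blast
      ultimately show ?thesis using c1 True by simp
    next
      case False
      then obtain c where cC: "c \<in> C" by auto
      have C1: "card C \<le> 1"
      proof -
        have "\<not> (anc ?c1 w \<and> anc ?c2 w)"
        proof
          assume "anc ?c1 w \<and> anc ?c2 w"
          hence "2*i-1 = 2*i" using anc_same_level[of "h+1" "2*i-1" w "2*i"] hh by simp
          thus False using hh by simp
        qed
        hence "C \<subseteq> {?c1} \<or> C \<subseteq> {?c2}" unfolding C_def by auto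
        thus ?thesis using card_mono[of "{?c1}" C] card_mono[of "{?c2}" C] by auto
      qed
      have "anc (h, i) c" using cC anc_child1[OF hh(2)] anc_child2[OF hh(2)] unfolding C_def by auto
      hence "anc (h, i) w" using cC anc_trans unfolding C_def by blast
      moreover have "js h i h i = i" unfolding js_def by simp
      ultimately have "anc (h, js h i h i) (K, J)" using wKJ by simp
      hence "anc (h, i) w'" using anc_sw[OF hh(2) hh(2) JJ, of h h K] w'e by simp
      hence hA: "(h, i) \<in> ?A" using hiG by simp
      have "card Z \<le> card (?A - {(h, i)})" using ZA fA by (intro card_mono) auto
      also have "\<dots> = card ?A - 1" using hA fA by simp
      moreover have "card ?A > 0" using hA fA card_gt_0_iff by blast
      ultimately have "card Z + 1 \<le> card ?A" by linarith
      moreover have "card ?A \<le> n" using cnt w'd by blast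
      ultimately show ?thesis using c1 C1 by linarith
    qed
  qed
  have inv: "Inv n M ?P" unfolding Inv_def using Pd fP levP cntP by blast
  have pot: "pot M ?P < pot M G"
  proof -
    let ?g = "\<lambda>z::nat\<times>nat. (3::nat)^(M - fst z)"
    have GF: "G - fork h i = G - {(h, i)}" unfolding fork_def using c1G c2G by auto
    have "pot M ?P \<le> sum ?g {?c1, ?c2} + sum ?g (sw h i ` (G - fork h i))"
      unfolding pot_def Phi_eq
      using sum_Un_nat[of "{?c1, ?c2}" "sw h i ` (G - fork h i)" ?g] fG by simp
    also have "sum ?g {?c1, ?c2} = 2 * 3^(M - h - 1)" using hh by simp
    also have "sum ?g (sw h i ` (G - fork h i)) \<le> sum (?g \<circ> sw h i) (G - fork h i)"
      using fG by (intro sum_image_le) auto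
    also have "sum (?g \<circ> sw h i) (G - fork h i) = sum ?g (G - {(h, i)})" unfolding GF o_def by simp
    also have "2 * 3^(M - h - 1) + sum ?g (G - {(h, i)}) < 3^(M - h) + sum ?g (G - {(h, i)})"
    proof -
      have e: "M - h = Suc (M - h - 1)" using hM by simp
      have "(3::nat)^(M-h) = 3 * 3^(M-h-1)" by (subst e) (simp only: power_Suc)
      thus ?thesis by simp
    qed
    also have "\<dots> = pot M G" unfolding pot_def using sum.remove[OF fG hiG, of ?g] by simp
    finally show ?thesis by simp
  qed
  show ?thesis using inv pot by simp
qed


lemma find_adm:
  assumes I: "Inv n M G" and xG: "x \<in> G" and xM: "fst x + n \<le> M"
  shows "\<exists>h i. admissible G h i \<and> h < M"
proof -
  have Gd: "G \<subseteq> dtree" and fG: "finite G"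
    and cnt: "\<forall>w\<in>dtree. card {z\<in>G. anc z w} \<le> n" using I unfolding Inv_def by auto
  define cn where "cn y = card {z\<in>G. anc x z \<and> anc z y}" for y
  define D where "D = {y\<in>G. anc x y \<and> fst y - fst x < cn y}"
  have "x \<in> {z\<in>G. anc x z \<and> anc z x}" using xG anc_refl by simp
  moreover have "finite {z\<in>G. anc x z \<and> anc z x}" using fG by simp
  ultimately have "cn x > 0" unfolding cn_def using card_gt_0_iff by blast
  hence xD: "x \<in> D" unfolding D_def using xG anc_refl by simp
  have fD: "finite D" unfolding D_def using fG by simp
  define mx where "mx = Max (fst ` D)"
  have "mx \<in> fst ` D" unfolding mx_def using fD xD by (intro Max_in) auto
  then obtain y where yD: "y \<in> D" and ymx: "fst y = mx" by auto
  have ymax: "fst y' \<le> fst y" if "y' \<in> D" for y' using that fD ymx unfolding mx_def by simp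
  obtain h i where yhi: "y = (h, i)" by fastforce
  have yG: "y \<in> G" and axy: "anc x y" and ylt: "fst y - fst x < cn y" using yD unfolding D_def by auto
  have yd: "y \<in> dtree" using yG Gd by auto
  have ii: "i \<ge> 1" using dtreeD yd yhi by auto
  have "cn y \<le> card {z\<in>G. anc z y}" unfolding cn_def using fG by (intro card_mono) auto
  also have "\<dots> \<le> n" using cnt yd by auto
  finally have "fst y < fst x + n" using ylt anc_fst[OF axy] by linarith
  hence hM: "h < M" using xM yhi by simp
  have nochild: False if cG: "c \<in> G" and ac: "anc y c" and fc: "fst c = h + 1" for c
  proof -
    have axc: "anc x c" using anc_trans axy ac by blast
    have s: "insert c {z\<in>G. anc x z \<and> anc z y} \<subseteq> {z\<in>G. anc x z \<and> anc z c}"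
    proof
      fix z assume "z \<in> insert c {z\<in>G. anc x z \<and> anc z y}"
      thus "z \<in> {z\<in>G. anc x z \<and> anc z c}"
      proof
        assume "z = c" thus ?thesis using cG axc anc_refl by simp
      next
        assume "z \<in> {z\<in>G. anc x z \<and> anc z y}"
        thus ?thesis using ac anc_trans by blast
      qed
    qed
    have "c \<notin> {z\<in>G. anc x z \<and> anc z y}" using anc_fst fc yhi by fastforce
    hence "cn y + 1 = card (insert c {z\<in>G. anc x z \<and> anc z y})" unfolding cn_def using fG by simp
    also have "\<dots> \<le> cn c" unfolding cn_def using s fG by (intro card_mono) auto
    finally have "fst c - fst x < cn c" using ylt fc yhi anc_fst[OF axy] by simp
    hence "c \<in> D" unfolding D_def using cG axc by simp
    thus False using ymax fc yhi by fastforce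
  qed
  have "admissible G h i" unfolding admissible_def
    using yG yhi nochild[of "(h+1, 2*i-1)"] nochild[of "(h+1, 2*i)"] anc_child1[OF ii] anc_child2[OF ii]
    by auto
  thus ?thesis using hM by blast
qed

lemma lh_bound:
  assumes Fd: "F \<subseteq> dtree" and fF: "finite F" and w: "w \<in> dtree"
  shows "card {z\<in>F. anc z w} \<le> lh F"
proof -
  obtain K J where wKJ: "w = (K, J)" by fastforce
  have KJ: "K \<ge> 1" "J \<ge> 1" "J \<le> 2^(K-1)" using dtreeD w wKJ by auto
  define t :: real where "t = real (J - 1) / 2^(K-1)"
  have tin: "t \<in> dyad (K-1) J" unfolding t_def dyad_def using KJ by (simp add: divide_strict_right_mono of_nat_diff)
  have t0: "0 \<le> t" unfolding t_def by simp
  have t1: "t < 1"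
  proof -
    have n: "J - 1 < (2::nat)^(K-1)" using KJ by linarith
    have "real (J - 1) < real ((2::nat)^(K-1))" using n by (simp only: of_nat_less_iff)
    hence "real (J - 1) < 2^(K-1)" by simp
    thus ?thesis unfolding t_def by simp
  qed
  have sub: "{z\<in>F. anc z w} \<subseteq> F \<inter> branch t"
  proof
    fix z assume "z \<in> {z\<in>F. anc z w}"
    hence zF: "z \<in> F" and a: "anc z w" by auto
    obtain k j where zkj: "z = (k, j)" by fastforce
    have zd: "(k, j) \<in> dtree" using zF Fd zkj by auto
    have kj: "k \<ge> 1" "j \<ge> 1" using dtreeD[OF zd] by auto
    have "k \<le> K" "(J - 1) div 2^(K - k) = j - 1" using a wKJ zkj unfolding anc_def by auto
    moreover have "K - 1 - (k - 1) = K - k" using kj by simp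
    ultimately have "dyad (K-1) J \<subseteq> dyad (k-1) j" using dyad_sub[of J j "K-1" "k-1"] KJ kj by simp
    hence "t \<in> dyad (k-1) j" using tin by auto
    thus "z \<in> F \<inter> branch t" unfolding branch_def using zF zkj zd by auto
  qed
  define S where "S = {card (F \<inter> branch t) | t. 0 \<le> t \<and> t < 1}"
  have fS: "finite S"
  proof -
    have "S \<subseteq> {..card F}" unfolding S_def using fF by (auto intro: card_mono)
    thus ?thesis using finite_subset by blast
  qed
  have "card (F \<inter> branch t) \<in> S" unfolding S_def using t0 t1 by blast
  hence "card (F \<inter> branch t) \<le> lh F" unfolding lh_def S_def[symmetric] using fS by simp
  moreover have "card {z\<in>F. anc z w} \<le> card (F \<inter> branch t)" using sub fF by (intro card_mono) auto
  ultimately show ?thesis by simp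
qed


definition good :: "nat \<Rightarrow> nat \<Rightarrow> (nat \<times> nat) set \<Rightarrow> bool" where
  "good a b G \<longleftrightarrow> (\<exists>(N::nat) (Fs :: nat \<Rightarrow> (nat \<times> nat) set).
     Fs 0 = G \<and>
     (\<forall>l\<in>{1..N}. \<exists>h i. admissible (Fs (l - 1)) h i \<and> Fs l = Phi h i (Fs (l - 1))) \<and>
     Fs N \<subseteq> dtree_lv a b)"

lemma good_base: "G \<subseteq> dtree_lv a b \<Longrightarrow> good a b G"
  unfolding good_def
  apply (rule exI[where x="0::nat"])
  apply (rule exI[where x="\<lambda>_::nat. G"])
  by simp

lemma good_step:
  assumes ad: "admissible G h i" and g: "good a b (Phi h i G)"
  shows "good a b G"
proof -
  obtain N :: nat and Fs :: "nat \<Rightarrow> (nat \<times> nat) set" where F0: "Fs 0 = Phi h i G"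
    and Fst: "\<forall>l\<in>{1..N}. \<exists>h i. admissible (Fs (l - 1)) h i \<and> Fs l = Phi h i (Fs (l - 1))"
    and FN: "Fs N \<subseteq> dtree_lv a b"
    using g unfolding good_def by blast
  define Fs' where "Fs' l = (if l = 0 then G else Fs (l - 1))" for l
  have st: "\<forall>l\<in>{1..N+1}. \<exists>h i. admissible (Fs' (l - 1)) h i \<and> Fs' l = Phi h i (Fs' (l - 1))"
  proof
    fix l :: nat assume l: "l \<in> {1..N+1}"
    show "\<exists>h i. admissible (Fs' (l - 1)) h i \<and> Fs' l = Phi h i (Fs' (l - 1))"
    proof (cases "l = 1")
      case True
      have "admissible (Fs' (l - 1)) h i \<and> Fs' l = Phi h i (Fs' (l - 1))"
        unfolding Fs'_def using True ad F0 by simp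
      thus ?thesis by blast
    next
      case False
      hence l1: "l - 1 \<in> {1..N}" using l by auto
      have e: "Fs' (l - 1) = Fs (l - 1 - 1)" "Fs' l = Fs (l - 1)" unfolding Fs'_def using l False by auto
      obtain h' i' where "admissible (Fs (l - 1 - 1)) h' i'" "Fs (l - 1) = Phi h' i' (Fs (l - 1 - 1))"
        using Fst l1 by blast
      hence "admissible (Fs' (l - 1)) h' i' \<and> Fs' l = Phi h' i' (Fs' (l - 1))" unfolding e by simp
      thus ?thesis by blast
    qed
  qed
  have "Fs' 0 = G" "Fs' (N+1) = Fs N" unfolding Fs'_def by auto
  hence "Fs' 0 = G \<and> (\<forall>l\<in>{1..N+1}. \<exists>h i. admissible (Fs' (l - 1)) h i \<and> Fs' l = Phi h i (Fs' (l - 1))) \<and>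
      Fs' (N+1) \<subseteq> dtree_lv a b" using st FN by simp
  thus ?thesis unfolding good_def
    apply -
    apply (rule exI[where x="N+1"])
    apply (rule exI[where x="Fs'"])
    by assumption
qed

lemma main_ind:
  "\<forall>G. pot M G = p \<longrightarrow> Inv n M G \<longrightarrow> good (M - n + 1) (M - n + n) G"
proof (induction p rule: less_induct)
  case (less p)
  show ?case
  proof (intro allI impI)
    fix G assume pG: "pot M G = p" and I: "Inv n M G"
    have Gd: "G \<subseteq> dtree" and lev: "\<forall>z\<in>G. fst z \<le> M" using I unfolding Inv_def by auto
    show "good (M - n + 1) (M - n + n) G"
    proof (cases "\<forall>z\<in>G. M < fst z + n")
      case True
      have sub: "G \<subseteq> dtree_lv (M - n + 1) (M - n + n)"
      proof
        fix z assume zG: "z \<in> G"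
        obtain k j where zkj: "z = (k, j)" by fastforce
        have "(k, j) \<in> dtree" using zG Gd zkj by auto
        moreover have "M < k + n" "k \<le> M" using True lev zG zkj by auto
        ultimately show "z \<in> dtree_lv (M - n + 1) (M - n + n)" unfolding dtree_def dtree_lv_def zkj
          by auto
      qed
      thus ?thesis by (rule good_base)
    next
      case False
      then obtain x where "x \<in> G" "fst x + n \<le> M" by auto
      then obtain h i where ad: "admissible G h i" and hM: "h < M" using find_adm[OF I] by blast
      have st: "Inv n M (Phi h i G)" "pot M (Phi h i G) < p" using step_inv[OF I ad hM] pG by auto
      have "\<forall>G'. pot M G' = pot M (Phi h i G) \<longrightarrow> Inv n M G' \<longrightarrow> good (M - n + 1) (M - n + n) G'"
        by (rule less.IH[OF st(2)])
      hence "good (M - n + 1) (M - n + n) (Phi h i G)" using st(1) by blast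
      thus ?thesis by (rule good_step[OF ad])
    qed
  qed
qed

theorem lemma3p8:
  fixes F :: "(nat \<times> nat) set"
  assumes "F \<subseteq> dtree" and "finite F"
  shows "\<exists>(m::nat) (N::nat) (Fs :: nat \<Rightarrow> (nat \<times> nat) set).
           Fs 0 = F \<and>
           (\<forall>l\<in>{1..N}. \<exists>h i. admissible (Fs (l - 1)) h i \<and> Fs l = Phi h i (Fs (l - 1))) \<and>
           Fs N \<subseteq> dtree_lv (m + 1) (m + lh F)"
proof -
  define M where "M = Max (insert 0 (fst ` F))"
  have M: "\<forall>z\<in>F. fst z \<le> M" unfolding M_def using assms(2) by simp
  have c: "\<forall>w\<in>dtree. card {z\<in>F. anc z w} \<le> lh F" using lh_bound[OF assms] by blast
  have I: "Inv (lh F) M F" unfolding Inv_def using assms M c by blast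
  have "good (M - lh F + 1) (M - lh F + lh F) F" using main_ind[of M "pot M F" "lh F"] I by blast
  hence "\<exists>(N::nat) (Fs :: nat \<Rightarrow> (nat \<times> nat) set).
     Fs 0 = F \<and>
     (\<forall>l\<in>{1..N}. \<exists>h i. admissible (Fs (l - 1)) h i \<and> Fs l = Phi h i (Fs (l - 1))) \<and>
     Fs N \<subseteq> dtree_lv (M - lh F + 1) (M - lh F + lh F)" unfolding good_def .
  thus ?thesis by (rule exI)
qed

end
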